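(* Let $B=\bigoplus_{i\in\mathbb{Z}}B_i$ be a $\mathbb{Z}$-graded integral domain with $e(B)=1$. For each $d\in\mathbb{N}\setminus\{0,1\}$ we have $\mathcal{X}_d\neq\emptyset$, and the following are equivalent: (a) no height-$1$ prime ideal of $B$ contains $\mathcal{X}_d$; (b) $\gcd(e(B/\mathfrak{p}),d)=1$ for every homogeneous prime ideal $\mathfrak{p}$ of $B$ of height $1$; (c) $d\in\Pi^*(B)$.
   Context: For a $\mathbb{Z}$-graded domain $C$, $e(C)=\gcd\{i\in\mathbb{Z}:C_i\neq0\}$. $\mathcal{X}_d$ is the set of nonzero homogeneous $x\in B$ with $\gcd(\deg x,d)=1$. $\Pi(B)$ is the set of primes $p$ with $p\mid e(B/\mathfrak{p})$ for some homogeneous height-$1$ prime $\mathfrak{p}$ of $B$; $\Pi^*(B)$ is the set of positive integers not divisible by any element of $\Pi(B)$. *)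

theory Defs
  imports Main "HOL-Computational_Algebra.Primes"
begin

definition graded_domain :: "(int \<Rightarrow> 'a::idom set) \<Rightarrow> bool" where
  "graded_domain G \<longleftrightarrow>
     (\<forall>i. 0 \<in> G i \<and> (\<forall>x\<in>G i. \<forall>y\<in>G i. x + y \<in> G i) \<and> (\<forall>x\<in>G i. - x \<in> G i)) \<and>
     (\<forall>i j. \<forall>x\<in>G i. \<forall>y\<in>G j. x * y \<in> G (i + j)) \<and>
     (\<forall>x. \<exists>!f. finite {i. f i \<noteq> 0} \<and> (\<forall>i. f i \<in> G i) \<and> x = sum f {i. f i \<noteq> 0})"

definition hcomp :: "(int \<Rightarrow> 'a::idom set) \<Rightarrow> 'a \<Rightarrow> int \<Rightarrow> 'a" where
  "hcomp G x = (THE f. finite {i. f i \<noteq> 0} \<and> (\<forall>i. f i \<in> G i) \<and> x = sum f {i. f i \<noteq> 0})"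

definition homogeneous :: "(int \<Rightarrow> 'a::idom set) \<Rightarrow> 'a \<Rightarrow> bool" where
  "homogeneous G x \<longleftrightarrow> (\<exists>i. x \<in> G i)"

definition e_grad :: "(int \<Rightarrow> 'a::idom set) \<Rightarrow> int" where
  "e_grad G = Gcd {i. G i \<noteq> {0}}"

definition is_ideal :: "'a::comm_ring_1 set \<Rightarrow> bool" where
  "is_ideal I \<longleftrightarrow> 0 \<in> I \<and> (\<forall>x\<in>I. \<forall>y\<in>I. x + y \<in> I) \<and> (\<forall>x\<in>I. \<forall>r. r * x \<in> I)"

definition prime_ideal :: "'a::comm_ring_1 set \<Rightarrow> bool" where
  "prime_ideal P \<longleftrightarrow> is_ideal P \<and> P \<noteq> UNIV \<and> (\<forall>a b. a * b \<in> P \<longrightarrow> a \<in> P \<or> b \<in> P)"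

definition prime_chain_to :: "'a::comm_ring_1 set \<Rightarrow> nat \<Rightarrow> bool" where
  "prime_chain_to P n \<longleftrightarrow> (\<exists>c :: nat \<Rightarrow> 'a set.
      (\<forall>i\<le>n. prime_ideal (c i)) \<and> (\<forall>i<n. c i \<subset> c (Suc i)) \<and> c n = P)"

definition height_one :: "'a::comm_ring_1 set \<Rightarrow> bool" where
  "height_one P \<longleftrightarrow> prime_ideal P \<and> prime_chain_to P 1 \<and> \<not> prime_chain_to P 2"

definition homogeneous_ideal :: "(int \<Rightarrow> 'a::idom set) \<Rightarrow> 'a set \<Rightarrow> bool" where
  "homogeneous_ideal G P \<longleftrightarrow> is_ideal P \<and> (\<forall>x\<in>P. \<forall>i. hcomp G x i \<in> P)"

text \<open>e(B/P): the quotient B/P is graded by (B/P)_i = image of B_i, so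
  (B/P)_i is nonzero iff B_i is not contained in P.\<close>
definition e_quot :: "(int \<Rightarrow> 'a::idom set) \<Rightarrow> 'a set \<Rightarrow> int" where
  "e_quot G P = Gcd {i. \<not> G i \<subseteq> P}"

definition X_set :: "(int \<Rightarrow> 'a::idom set) \<Rightarrow> nat \<Rightarrow> 'a set" where
  "X_set G d = {x. x \<noteq> 0 \<and> (\<exists>i. x \<in> G i \<and> coprime i (int d))}"

definition Pi_set :: "(int \<Rightarrow> 'a::idom set) \<Rightarrow> nat set" where
  "Pi_set G = {p. prime p \<and> (\<exists>P. homogeneous_ideal G P \<and> height_one P \<and> int p dvd e_quot G P)}"

definition Pi_star :: "(int \<Rightarrow> 'a::idom set) \<Rightarrow> nat set" where
  "Pi_star G = {n. n > 0 \<and> (\<forall>p\<in>Pi_set G. \<not> p dvd n)}"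

end

theory Submission
  imports Defs "HOL-Computational_Algebra.Primes"
begin


lemma gdD:
  assumes "graded_domain G"
  shows "0 \<in> G i" "x \<in> G i \<Longrightarrow> y \<in> G i \<Longrightarrow> x + y \<in> G i"
    "x \<in> G i \<Longrightarrow> - x \<in> G i" "x \<in> G i \<Longrightarrow> y \<in> G j \<Longrightarrow> x * y \<in> G (i + j)"
    "\<exists>!f. finite {i. f i \<noteq> 0} \<and> (\<forall>i. f i \<in> G i) \<and> x = sum f {i. f i \<noteq> 0}"
proof -
  note A = assms[unfolded graded_domain_def]
  have A1: "\<And>i. 0 \<in> G i \<and> (\<forall>x\<in>G i. \<forall>y\<in>G i. x + y \<in> G i) \<and> (\<forall>x\<in>G i. - x \<in> G i)"
    using A by (rule conjE) (erule allE)
  have A2: "\<forall>i j. \<forall>x\<in>G i. \<forall>y\<in>G j. x * y \<in> G (i + j)" using A by (elim conjE)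
  have A3: "\<forall>x. \<exists>!f. finite {i. f i \<noteq> 0} \<and> (\<forall>i. f i \<in> G i) \<and> x = sum f {i. f i \<noteq> 0}"
    using A by (elim conjE)
  show "0 \<in> G i" using A1 by simp
  show "x \<in> G i \<Longrightarrow> y \<in> G i \<Longrightarrow> x + y \<in> G i" using A1 by simp
  show "x \<in> G i \<Longrightarrow> - x \<in> G i" using A1 by simp
  show "x \<in> G i \<Longrightarrow> y \<in> G j \<Longrightarrow> x * y \<in> G (i + j)" using A2 by simp
  show "\<exists>!f. finite {i. f i \<noteq> 0} \<and> (\<forall>i. f i \<in> G i) \<and> x = sum f {i. f i \<noteq> 0}"
    using A3 by (rule allE)
qed

lemma hcomp_props:
  assumes "graded_domain G"
  shows "finite {i. hcomp G x i \<noteq> 0}" "hcomp G x i \<in> G i"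
    "x = sum (hcomp G x) {i. hcomp G x i \<noteq> 0}"
proof -
  have "finite {i. hcomp G x i \<noteq> 0} \<and> (\<forall>i. hcomp G x i \<in> G i) \<and> x = sum (hcomp G x) {i. hcomp G x i \<noteq> 0}"
    unfolding hcomp_def by (rule theI'[OF gdD(5)[OF assms]])
  then show "finite {i. hcomp G x i \<noteq> 0}" "hcomp G x i \<in> G i"
    "x = sum (hcomp G x) {i. hcomp G x i \<noteq> 0}" by auto
qed

lemma hcomp_eq:
  assumes "graded_domain G" "finite F" "\<And>i. f i \<in> G i" "\<And>i. i \<notin> F \<Longrightarrow> f i = 0"
    "x = sum f F"
  shows "hcomp G x = f"
proof -
  have sub: "{i. f i \<noteq> 0} \<subseteq> F" using assms(4) by auto
  have fin: "finite {i. f i \<noteq> 0}" using sub assms(2) finite_subset by blast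
  have "sum f {i. f i \<noteq> 0} = sum f F"
    by (rule sum.mono_neutral_left[OF assms(2) sub]) auto
  then have P: "finite {i. f i \<noteq> 0} \<and> (\<forall>i. f i \<in> G i) \<and> x = sum f {i. f i \<noteq> 0}"
    using fin assms(3,5) by auto
  show ?thesis unfolding hcomp_def
    by (rule the1_equality[OF gdD(5)[OF assms(1), of x]]) (rule P)
qed

lemma sum_in_G:
  assumes "graded_domain G" "finite F" "\<And>i. i \<in> F \<Longrightarrow> f i \<in> G k"
  shows "sum f F \<in> G k"
  using assms(2,3)
proof (induction F rule: finite_induct)
  case empty then show ?case using gdD(1)[OF assms(1)] by simp
next
  case (insert a F) then show ?case using gdD(2)[OF assms(1)] by simp
qed

lemma hcomp_homog:
  assumes "graded_domain G" "x \<in> G i"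
  shows "hcomp G x = (\<lambda>j. if j = i then x else 0)"
  by (rule hcomp_eq[OF assms(1), of "{i}"]) (auto simp: assms gdD(1)[OF assms(1)])

lemma hcomp_zero:
  assumes "graded_domain G"
  shows "hcomp G 0 = (\<lambda>j. 0)"
  by (rule hcomp_eq[OF assms(1), of "{}"]) (auto simp: gdD(1)[OF assms(1)])

lemma hcomp_add:
  assumes "graded_domain G"
  shows "hcomp G (x + y) = (\<lambda>i. hcomp G x i + hcomp G y i)"
proof -
  define Sx where "Sx = {i. hcomp G x i \<noteq> 0}"
  define Sy where "Sy = {i. hcomp G y i \<noteq> 0}"
  have fx: "finite Sx" and fy: "finite Sy" unfolding Sx_def Sy_def using hcomp_props(1)[OF assms] by auto
  have fU: "finite (Sx \<union> Sy)" using fx fy by simp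
  have "sum (hcomp G x) Sx = sum (hcomp G x) (Sx \<union> Sy)"
    by (rule sum.mono_neutral_left[OF fU]) (auto simp: Sx_def)
  then have ex: "x = sum (hcomp G x) (Sx \<union> Sy)"
    using hcomp_props(3)[OF assms, of x] unfolding Sx_def by simp
  have "sum (hcomp G y) Sy = sum (hcomp G y) (Sx \<union> Sy)"
    by (rule sum.mono_neutral_left[OF fU]) (auto simp: Sy_def)
  then have ey: "y = sum (hcomp G y) (Sx \<union> Sy)"
    using hcomp_props(3)[OF assms, of y] unfolding Sy_def by simp
  have e: "x + y = (\<Sum>i\<in>Sx \<union> Sy. hcomp G x i + hcomp G y i)"
    using ex ey by (simp add: sum.distrib)
  show ?thesis
  proof (rule hcomp_eq[OF assms fU _ _ e])
    fix i show "hcomp G x i + hcomp G y i \<in> G i"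
      by (rule gdD(2)[OF assms]) (rule hcomp_props(2)[OF assms])+
  next
    fix i assume "i \<notin> Sx \<union> Sy"
    then show "hcomp G x i + hcomp G y i = 0" unfolding Sx_def Sy_def by simp
  qed
qed

lemma hcomp_mult:
  assumes "graded_domain G"
  shows "hcomp G (a * b) k = (\<Sum>i\<in>{i. hcomp G a i \<noteq> 0}. hcomp G a i * hcomp G b (k - i))"
proof -
  let ?Sa = "{i. hcomp G a i \<noteq> 0}" and ?Sb = "{i. hcomp G b i \<noteq> 0}"
  define f where "f = (\<lambda>k. \<Sum>i\<in>?Sa. hcomp G a i * hcomp G b (k - i))"
  define K where "K = (\<lambda>(i,j). i + j) ` (?Sa \<times> ?Sb)"
  have fa: "finite ?Sa" and fb: "finite ?Sb" using hcomp_props[OF assms] by auto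
  have fK: "finite K" unfolding K_def using fa fb by auto
  have fG: "f k \<in> G k" for k
    unfolding f_def
  proof (rule sum_in_G[OF assms fa])
    fix i
    have "hcomp G a i * hcomp G b (k - i) \<in> G (i + (k - i))"
      by (rule gdD(4)[OF assms]) (auto simp: hcomp_props(2)[OF assms])
    then show "hcomp G a i * hcomp G b (k - i) \<in> G k" by simp
  qed
  have f0: "f k = 0" if "k \<notin> K" for k
    unfolding f_def
  proof (rule sum.neutral, rule ballI)
    fix i assume i: "i \<in> ?Sa"
    have "k - i \<notin> ?Sb"
    proof
      assume "k - i \<in> ?Sb"
      then have "(i, k - i) \<in> ?Sa \<times> ?Sb" using i by auto
      then have "i + (k - i) \<in> K" unfolding K_def by force
      then show False using that by simp
    qed
    then show "hcomp G a i * hcomp G b (k - i) = 0" by simp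
  qed
  have inner: "(\<Sum>j\<in>?Sb. hcomp G a i * hcomp G b j) = (\<Sum>k\<in>K. hcomp G a i * hcomp G b (k - i))"
    if i: "i \<in> ?Sa" for i
  proof -
    have sub: "(+) i ` ?Sb \<subseteq> K" unfolding K_def using i by force
    have "(\<Sum>k\<in>K. hcomp G a i * hcomp G b (k - i)) = (\<Sum>k\<in>(+) i ` ?Sb. hcomp G a i * hcomp G b (k - i))"
      apply (rule sum.mono_neutral_right[OF fK sub])
      apply clarsimp
      by (metis (mono_tags, lifting) add.commute diff_add_cancel image_eqI mem_Collect_eq)
    also have "\<dots> = (\<Sum>j\<in>?Sb. hcomp G a i * hcomp G b j)"
      by (subst sum.reindex) (auto simp: inj_on_def)
    finally show ?thesis by simp
  qed
  have "a * b = (\<Sum>i\<in>?Sa. hcomp G a i) * (\<Sum>j\<in>?Sb. hcomp G b j)"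
    using hcomp_props(3)[OF assms, of a] hcomp_props(3)[OF assms, of b] by simp
  also have "\<dots> = (\<Sum>i\<in>?Sa. \<Sum>j\<in>?Sb. hcomp G a i * hcomp G b j)"
    by (simp add: sum_product)
  also have "\<dots> = (\<Sum>i\<in>?Sa. \<Sum>k\<in>K. hcomp G a i * hcomp G b (k - i))"
    by (rule sum.cong[OF refl]) (simp add: inner)
  also have "\<dots> = sum f K" unfolding f_def by (rule sum.swap)
  finally have "a * b = sum f K" .
  then have "hcomp G (a * b) = f"
    by (intro hcomp_eq[OF assms fK fG f0]) auto
  then show ?thesis unfolding f_def by simp
qed



lemma semigroup_coprime:
  fixes T :: "int set" and d :: nat
  assumes ne: "T \<noteq> {}" and cl: "\<And>a b. a \<in> T \<Longrightarrow> b \<in> T \<Longrightarrow> a + b \<in> T"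
    and cop: "coprime (Gcd T) (int d)" and d: "d \<ge> 2"
  shows "\<exists>t\<in>T. coprime t (int d)"
proof -
  define D where "D = int d"
  have D2: "D \<ge> 2" using d unfolding D_def by simp
  have mult: "int (Suc n) * t \<in> T" if "t \<in> T" for n t
  proof (induction n)
    case 0 then show ?case using that by simp
  next
    case (Suc n)
    have "int (Suc (Suc n)) * t = int (Suc n) * t + t" by (simp add: algebra_simps)
    then show ?case using cl[OF Suc.IH that] by simp
  qed
  define n where "n = d - 2"
  have n: "D - 1 = int (Suc n)" using d unfolding n_def D_def by (simp add: of_nat_diff)
  have m1: "(D - 1) * t \<in> T" if "t \<in> T" for t using mult[OF that, of n] n by simp
  have mD: "D * t \<in> T" if "t \<in> T" for t
    using cl[OF m1[OF that] that] by (simp add: algebra_simps)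
  define L where "L = {x. \<exists>t\<in>T. D dvd (t - x)}"
  have TL: "t \<in> L" if "t \<in> T" for t using that unfolding L_def by (intro CollectI bexI[of _ t]) auto
  have Ladd: "x + y \<in> L" if xL: "x \<in> L" and yL: "y \<in> L" for x y
  proof -
    from xL obtain t1 where t1: "t1 \<in> T" "D dvd (t1 - x)" unfolding L_def by blast
    from yL obtain t2 where t2: "t2 \<in> T" "D dvd (t2 - y)" unfolding L_def by blast
    have "D dvd (t1 - x) + (t2 - y)" using t1 t2 by (rule_tac dvd_add) auto
    moreover have e: "(t1 + t2) - (x + y) = (t1 - x) + (t2 - y)" by simp
    ultimately have "D dvd (t1 + t2) - (x + y)" unfolding e by simp
    moreover have "t1 + t2 \<in> T" using cl t1 t2 by blast
    ultimately show ?thesis unfolding L_def by blast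
  qed
  have Lneg: "- x \<in> L" if xL: "x \<in> L" for x
  proof -
    from xL obtain t where t: "t \<in> T" "D dvd (t - x)" unfolding L_def by blast
    have e: "(D - 1) * t - (- x) = D * t - (t - x)" by (simp add: algebra_simps)
    have "D dvd D * t - (t - x)" using t by simp
    then have "D dvd (D - 1) * t - (- x)" unfolding e .
    then show ?thesis unfolding L_def using m1[OF t(1)] by blast
  qed
  obtain t0 where t0: "t0 \<in> T" using ne by auto
  have DL: "D \<in> L" unfolding L_def using mD[OF t0] by (intro CollectI bexI[of _ "D * t0"]) (auto simp: algebra_simps)
  have L0: "0 \<in> L" using Ladd[OF DL Lneg[OF DL]] by simp
  have Lmultn: "int k * x \<in> L" if "x \<in> L" for k x
    using that by (induction k) (auto simp: L0 algebra_simps intro: Ladd)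
  have Lmult: "k * x \<in> L" if "x \<in> L" for k x
  proof (cases "k \<ge> 0")
    case True then show ?thesis using Lmultn[OF that, of "nat k"] by simp
  next
    case False then show ?thesis using Lneg[OF Lmultn[OF that, of "nat (-k)"]] by simp
  qed
  define N where "N = {n::nat. n > 0 \<and> int n \<in> L}"
  have "d \<in> N" unfolding N_def using DL D_def d by simp
  then have mN: "(LEAST n. n \<in> N) \<in> N" by (rule LeastI)
  define m where "m = int (LEAST n. n \<in> N)"
  have mpos: "m > 0" and mL: "m \<in> L" using mN unfolding m_def N_def by auto
  have mmin: "m \<le> y" if "y \<in> L" "y > 0" for y
  proof -
    have "nat y \<in> N" unfolding N_def using that by simp
    then have "(LEAST n. n \<in> N) \<le> nat y" by (rule Least_le)
    then show ?thesis unfolding m_def using that by simp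
  qed
  have mdvd: "m dvd x" if "x \<in> L" for x
  proof -
    have "x mod m = x + (- (x div m)) * m" by (simp add: minus_div_mult_eq_mod[symmetric] algebra_simps)
    moreover have "x + (- (x div m)) * m \<in> L" using Ladd[OF that Lmult[OF mL]] by blast
    ultimately have r: "x mod m \<in> L" by simp
    have "x mod m = 0"
    proof (rule ccontr)
      assume "x mod m \<noteq> 0"
      then have "x mod m > 0" using mpos pos_mod_sign[of m x] by linarith
      then have "m \<le> x mod m" using mmin r by blast
      then show False using mpos pos_mod_bound[of m x] by linarith
    qed
    then show ?thesis by (simp add: mod_eq_0_iff_dvd)
  qed
  have "m dvd Gcd T" by (rule Gcd_greatest) (auto intro: mdvd TL)
  moreover have "m dvd D" by (rule mdvd[OF DL])
  ultimately have "is_unit m" using cop unfolding D_def by (meson coprime_common_divisor)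
  then have "m = 1" using mpos by simp
  then have "1 \<in> L" using mL by simp
  then obtain t where t: "t \<in> T" "D dvd (t - 1)" unfolding L_def by auto
  then obtain k where k0: "t - 1 = D * k" by (auto elim: dvdE)
  then have k: "t = 1 + D * k" by simp
  have "coprime t D"
  proof (rule coprimeI)
    fix c assume "c dvd t" "c dvd D"
    then have "c dvd t - D * k" by (simp add: dvd_diff)
    then show "is_unit c" using k by simp
  qed
  then show ?thesis using t(1) D_def by auto
qed



lemma ideal_sum:
  assumes "is_ideal I" "finite F" "\<And>i. i \<in> F \<Longrightarrow> f i \<in> I"
  shows "sum f F \<in> I"
  using assms(2,3)
proof (induction F rule: finite_induct)
  case empty then show ?case using assms(1) unfolding is_ideal_def by simp
next
  case (insert a F) then show ?case using assms(1) unfolding is_ideal_def by simp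
qed

lemma ideal_multL: "is_ideal I \<Longrightarrow> x \<in> I \<Longrightarrow> r * x \<in> I"
  unfolding is_ideal_def by blast
lemma ideal_multR: "is_ideal I \<Longrightarrow> x \<in> I \<Longrightarrow> x * r \<in> I"
  unfolding is_ideal_def by (metis mult.commute)
lemma ideal_add: "is_ideal I \<Longrightarrow> x \<in> I \<Longrightarrow> y \<in> I \<Longrightarrow> x + y \<in> I"
  unfolding is_ideal_def by blast
lemma ideal_diff: "is_ideal I \<Longrightarrow> x \<in> I \<Longrightarrow> y \<in> I \<Longrightarrow> x - y \<in> I"
  using ideal_add[of I x "(-1) * y"] ideal_multL[of I y "-1"] by simp
lemma ideal_zero: "is_ideal I \<Longrightarrow> 0 \<in> I"
  unfolding is_ideal_def by blast

definition Pstar :: "(int \<Rightarrow> 'a::idom set) \<Rightarrow> 'a set \<Rightarrow> 'a set" where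
  "Pstar G P = {x. \<forall>i. hcomp G x i \<in> P}"

lemma Pstar_sub:
  assumes "graded_domain G" "is_ideal P"
  shows "Pstar G P \<subseteq> P"
proof
  fix x assume "x \<in> Pstar G P"
  then have "\<forall>i. hcomp G x i \<in> P" unfolding Pstar_def by auto
  then have "sum (hcomp G x) {i. hcomp G x i \<noteq> 0} \<in> P"
    by (intro ideal_sum[OF assms(2)]) (auto simp: hcomp_props[OF assms(1)])
  then show "x \<in> P" using hcomp_props(3)[OF assms(1), of x] by simp
qed

lemma homog_in_Pstar:
  assumes "graded_domain G" "is_ideal P" "x \<in> G i" "x \<in> P"
  shows "x \<in> Pstar G P"
  unfolding Pstar_def using hcomp_homog[OF assms(1,3)] assms(4) ideal_zero[OF assms(2)] by auto

lemma Pstar_ideal: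
  assumes "graded_domain G" "is_ideal P"
  shows "is_ideal (Pstar G P)"
  unfolding is_ideal_def
proof (intro conjI ballI allI)
  show "0 \<in> Pstar G P" unfolding Pstar_def using hcomp_zero[OF assms(1)] ideal_zero[OF assms(2)] by simp
next
  fix x y assume "x \<in> Pstar G P" "y \<in> Pstar G P"
  then show "x + y \<in> Pstar G P" unfolding Pstar_def using hcomp_add[OF assms(1)] ideal_add[OF assms(2)] by simp
next
  fix x r assume x: "x \<in> Pstar G P"
  show "r * x \<in> Pstar G P" unfolding Pstar_def
  proof (intro CollectI allI)
    fix k
    show "hcomp G (r * x) k \<in> P" unfolding hcomp_mult[OF assms(1)]
      using x unfolding Pstar_def
      by (intro ideal_sum[OF assms(2)]) (auto simp: hcomp_props[OF assms(1)] intro: ideal_multL[OF assms(2)])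
  qed
qed

lemma Pstar_homog:
  assumes "graded_domain G" "is_ideal P"
  shows "homogeneous_ideal G (Pstar G P)"
  unfolding homogeneous_ideal_def
proof (intro conjI Pstar_ideal[OF assms] ballI allI)
  fix x i assume "x \<in> Pstar G P"
  then have "hcomp G x i \<in> P" unfolding Pstar_def by auto
  then show "hcomp G x i \<in> Pstar G P"
    by (rule homog_in_Pstar[OF assms hcomp_props(2)[OF assms(1)]])
qed

lemma Pstar_prime:
  assumes "graded_domain G" "prime_ideal P"
  shows "prime_ideal (Pstar G P)"
proof -
  have I: "is_ideal P" and nU: "P \<noteq> UNIV" and pr: "\<And>a b. a * b \<in> P \<Longrightarrow> a \<in> P \<or> b \<in> P"
    using assms(2) unfolding prime_ideal_def by auto
  have "Pstar G P \<noteq> UNIV" using Pstar_sub[OF assms(1) I] nU by auto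
  moreover have "a \<in> Pstar G P \<or> b \<in> Pstar G P" if ab: "a * b \<in> Pstar G P" for a b
  proof (rule ccontr)
    assume "\<not> (a \<in> Pstar G P \<or> b \<in> Pstar G P)"
    then have na: "{i. hcomp G a i \<notin> P} \<noteq> {}" and nb: "{i. hcomp G b i \<notin> P} \<noteq> {}"
      unfolding Pstar_def by auto
    let ?Sa = "{i. hcomp G a i \<noteq> 0}"
    have sa: "{i. hcomp G a i \<notin> P} \<subseteq> ?Sa" using ideal_zero[OF I] by auto
    have sb: "{i. hcomp G b i \<notin> P} \<subseteq> {i. hcomp G b i \<noteq> 0}" using ideal_zero[OF I] by auto
    have fa: "finite {i. hcomp G a i \<notin> P}" using sa hcomp_props(1)[OF assms(1)] finite_subset by blast
    have fb: "finite {i. hcomp G b i \<notin> P}" using sb hcomp_props(1)[OF assms(1)] finite_subset by blast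
    define i0 where "i0 = Max {i. hcomp G a i \<notin> P}"
    define j0 where "j0 = Max {i. hcomp G b i \<notin> P}"
    have i0: "hcomp G a i0 \<notin> P" unfolding i0_def using Max_in[OF fa na] by simp
    have j0: "hcomp G b j0 \<notin> P" unfolding j0_def using Max_in[OF fb nb] by simp
    have ai: "hcomp G a i \<in> P" if "i > i0" for i
      using Max_ge[OF fa, of i] that unfolding i0_def by (meson linorder_not_le mem_Collect_eq)
    have bj: "hcomp G b j \<in> P" if "j > j0" for j
      using Max_ge[OF fb, of j] that unfolding j0_def by (meson linorder_not_le mem_Collect_eq)
    have i0S: "i0 \<in> ?Sa" using i0 sa by auto
    have fSa: "finite ?Sa" using hcomp_props(1)[OF assms(1)] by blast
    have "hcomp G (a * b) (i0 + j0) \<in> P" using ab unfolding Pstar_def by auto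
    then have s1: "(\<Sum>i\<in>?Sa. hcomp G a i * hcomp G b (i0 + j0 - i)) \<in> P"
      unfolding hcomp_mult[OF assms(1)] .
    define R where "R = (\<Sum>i\<in>?Sa - {i0}. hcomp G a i * hcomp G b (i0 + j0 - i))"
    have eq: "(\<Sum>i\<in>?Sa. hcomp G a i * hcomp G b (i0 + j0 - i)) = hcomp G a i0 * hcomp G b j0 + R"
      unfolding R_def
      using sum.remove[OF fSa i0S, of "\<lambda>i. hcomp G a i * hcomp G b (i0 + j0 - i)"] by simp
    have s2: "R \<in> P" unfolding R_def
    proof (rule ideal_sum[OF I])
      show "finite (?Sa - {i0})" using fSa by simp
    next
      fix i assume "i \<in> ?Sa - {i0}"
      then have "i > i0 \<or> i < i0" by auto
      then show "hcomp G a i * hcomp G b (i0 + j0 - i) \<in> P"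
      proof
        assume "i > i0" then show ?thesis using ai ideal_multR[OF I] by blast
      next
        assume "i < i0" then have "i0 + j0 - i > j0" by simp
        then show ?thesis using bj ideal_multL[OF I] by blast
      qed
    qed
    have s1': "hcomp G a i0 * hcomp G b j0 + R \<in> P" using s1 unfolding eq .
    have "(hcomp G a i0 * hcomp G b j0 + R) - R \<in> P" by (rule ideal_diff[OF I s1' s2])
    then have "hcomp G a i0 * hcomp G b j0 \<in> P" by simp
    then show False using pr i0 j0 by blast
  qed
  ultimately show ?thesis unfolding prime_ideal_def using Pstar_ideal[OF assms(1) I] by blast
qed



lemma zero_prime: "prime_ideal ({0} :: 'a::idom set)"
proof -
  have "(1::'a) \<notin> {0}" by simp
  then have "{0::'a} \<noteq> UNIV" by blast
  then show ?thesis unfolding prime_ideal_def is_ideal_def by auto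
qed

lemma Xset_in_Pstar:
  assumes "graded_domain G" "is_ideal P" "X_set G d \<subseteq> P"
  shows "X_set G d \<subseteq> Pstar G P"
  using assms homog_in_Pstar unfolding X_set_def by blast

lemma height_one_homog:
  assumes GD: "graded_domain G" and h: "height_one P" and X: "X_set G d \<subseteq> P" and ne: "X_set G d \<noteq> {}"
  shows "Pstar G P = P"
proof (rule ccontr)
  assume neq: "Pstar G P \<noteq> P"
  have pP: "prime_ideal P" using h unfolding height_one_def by auto
  then have I: "is_ideal P" unfolding prime_ideal_def by auto
  have sub: "Pstar G P \<subset> P" using Pstar_sub[OF GD I] neq by auto
  obtain x where x: "x \<in> X_set G d" using ne by auto
  have xQ: "x \<in> Pstar G P" using Xset_in_Pstar[OF GD I X] x by auto
  have x0: "x \<noteq> 0" using x unfolding X_set_def by auto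
  have z: "{0} \<subset> Pstar G P" using xQ x0 ideal_zero[OF Pstar_ideal[OF GD I]] by auto
  define c where "c = (\<lambda>n::nat. if n = 0 then {0} else if n = 1 then Pstar G P else P)"
  have "prime_chain_to P 2" unfolding prime_chain_to_def
  proof (intro exI[of _ c] conjI allI impI)
    fix i :: nat assume "i \<le> 2"
    then have "i = 0 \<or> i = 1 \<or> i = 2" by auto
    then show "prime_ideal (c i)" unfolding c_def using zero_prime Pstar_prime[OF GD pP] pP by auto
  next
    fix i :: nat assume "i < 2"
    then have "i = 0 \<or> i = 1" by auto
    then show "c i \<subset> c (Suc i)" unfolding c_def using z sub by auto
  next
    show "c 2 = P" unfolding c_def by simp
  qed
  then show False using h unfolding height_one_def by auto
qed

lemma equot_closed:
  assumes GD: "graded_domain G" and pP: "prime_ideal P"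
  shows "\<And>a b. a \<in> {i. \<not> G i \<subseteq> P} \<Longrightarrow> b \<in> {i. \<not> G i \<subseteq> P} \<Longrightarrow> a + b \<in> {i. \<not> G i \<subseteq> P}"
proof -
  fix a b assume "a \<in> {i. \<not> G i \<subseteq> P}" "b \<in> {i. \<not> G i \<subseteq> P}"
  then obtain x y where "x \<in> G a" "x \<notin> P" "y \<in> G b" "y \<notin> P" by auto
  moreover then have "x * y \<notin> P" using pP unfolding prime_ideal_def by blast
  ultimately show "a + b \<in> {i. \<not> G i \<subseteq> P}" using gdD(4)[OF GD] by blast
qed

theorem lemma3p10:
  fixes G :: "int \<Rightarrow> 'a::idom set" and d :: nat
  assumes "graded_domain G"
    and "e_grad G = 1"
    and "d \<ge> 2"
  shows "X_set G d \<noteq> {}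
    \<and> ((\<not> (\<exists>P. height_one P \<and> X_set G d \<subseteq> P))
         \<longleftrightarrow> (\<forall>P. homogeneous_ideal G P \<and> height_one P \<longrightarrow> gcd (e_quot G P) (int d) = 1))
    \<and> ((\<forall>P. homogeneous_ideal G P \<and> height_one P \<longrightarrow> gcd (e_quot G P) (int d) = 1)
         \<longleftrightarrow> d \<in> Pi_star G)"
proof -
  note GD = assms(1)
  define S where "S = {i. G i \<noteq> {0}}"
  have GS: "Gcd S = 1" using assms(2) unfolding S_def e_grad_def by simp
  have Sne: "S \<noteq> {}" using GS by auto
  have Smem: "\<exists>x\<in>G i. x \<noteq> 0" if "i \<in> S" for i
    using that gdD(1)[OF GD, of i] unfolding S_def by blast
  have Scl: "a + b \<in> S" if aS: "a \<in> S" and bS: "b \<in> S" for a b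
  proof -
    obtain x where x: "x \<in> G a" "x \<noteq> 0" using Smem[OF aS] by blast
    obtain y where y: "y \<in> G b" "y \<noteq> 0" using Smem[OF bS] by blast
    have "x * y \<in> G (a + b)" by (rule gdD(4)[OF GD x(1) y(1)])
    moreover have "x * y \<noteq> 0" using x y by simp
    ultimately have "G (a + b) \<noteq> {0}" by blast
    then show ?thesis unfolding S_def by simp
  qed
  obtain t where t: "t \<in> S" "coprime t (int d)"
    using semigroup_coprime[OF Sne Scl _ assms(3)] GS by auto
  obtain x where "x \<in> G t" "x \<noteq> 0" using Smem[OF t(1)] by auto
  then have Xne: "X_set G d \<noteq> {}" unfolding X_set_def using t(2) by auto
  have AB: "(\<not> (\<exists>P. height_one P \<and> X_set G d \<subseteq> P))
         \<longleftrightarrow> (\<forall>P. homogeneous_ideal G P \<and> height_one P \<longrightarrow> gcd (e_quot G P) (int d) = 1)"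
  proof
    assume a: "\<not> (\<exists>P. height_one P \<and> X_set G d \<subseteq> P)"
    show "\<forall>P. homogeneous_ideal G P \<and> height_one P \<longrightarrow> gcd (e_quot G P) (int d) = 1"
    proof (intro allI impI)
      fix P assume P: "homogeneous_ideal G P \<and> height_one P"
      show "gcd (e_quot G P) (int d) = 1"
      proof (rule ccontr)
        assume g: "gcd (e_quot G P) (int d) \<noteq> 1"
        have "X_set G d \<subseteq> P"
        proof
          fix x assume "x \<in> X_set G d"
          then obtain i where xi: "x \<in> G i" "coprime i (int d)" unfolding X_set_def by auto
          show "x \<in> P"
          proof (rule ccontr)
            assume "x \<notin> P"
            then have "i \<in> {i. \<not> G i \<subseteq> P}" using xi by auto
            then have "e_quot G P dvd i" unfolding e_quot_def by (rule Gcd_dvd)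
            then have "gcd (e_quot G P) (int d) dvd gcd i (int d)" by (intro gcd_greatest) (auto intro: dvd_trans[OF gcd_dvd1])
            moreover have "gcd i (int d) = 1" using xi(2) by (simp add: coprime_iff_gcd_eq_1)
            ultimately have "is_unit (gcd (e_quot G P) (int d))" by simp
            then show False using g by simp
          qed
        qed
        then show False using a P by auto
      qed
    qed
  next
    assume b: "\<forall>P. homogeneous_ideal G P \<and> height_one P \<longrightarrow> gcd (e_quot G P) (int d) = 1"
    show "\<not> (\<exists>P. height_one P \<and> X_set G d \<subseteq> P)"
    proof
      assume "\<exists>P. height_one P \<and> X_set G d \<subseteq> P"
      then obtain P where h: "height_one P" and X: "X_set G d \<subseteq> P" by auto
      have pP: "prime_ideal P" using h unfolding height_one_def by auto
      then have I: "is_ideal P" unfolding prime_ideal_def by auto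
      have "homogeneous_ideal G P" using Pstar_homog[OF GD I] height_one_homog[OF GD h X Xne] by simp
      then have g: "gcd (e_quot G P) (int d) = 1" using b h by auto
      have Tne: "{i. \<not> G i \<subseteq> P} \<noteq> {}"
      proof
        assume "{i. \<not> G i \<subseteq> P} = {}"
        then have "e_quot G P = 0" unfolding e_quot_def by simp
        then show False using g assms(3) by simp
      qed
      have cg: "coprime (Gcd {i. \<not> G i \<subseteq> P}) (int d)" using g unfolding e_quot_def
        by (simp add: coprime_iff_gcd_eq_1)
      obtain s where s: "s \<in> {i. \<not> G i \<subseteq> P}" "coprime s (int d)"
        using semigroup_coprime[OF Tne equot_closed[OF GD pP] cg assms(3)] by blast
      from s(1) obtain y where y: "y \<in> G s" "y \<notin> P" by blast
      have "y \<noteq> 0" using ideal_zero[OF I] y(2) by blast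
      then have "y \<in> X_set G d" unfolding X_set_def using y(1) s(2) by blast
      then show False using X y(2) by blast
    qed
  qed
  have BC: "(\<forall>P. homogeneous_ideal G P \<and> height_one P \<longrightarrow> gcd (e_quot G P) (int d) = 1)
         \<longleftrightarrow> d \<in> Pi_star G"
  proof
    assume b: "\<forall>P. homogeneous_ideal G P \<and> height_one P \<longrightarrow> gcd (e_quot G P) (int d) = 1"
    show "d \<in> Pi_star G" unfolding Pi_star_def
    proof (intro CollectI conjI ballI)
      show "d > 0" using assms(3) by simp
    next
      fix p assume "p \<in> Pi_set G"
      then obtain P where p: "prime p" "homogeneous_ideal G P" "height_one P" "int p dvd e_quot G P"
        unfolding Pi_set_def by auto
      show "\<not> p dvd d"
      proof
        assume "p dvd d"
        then have "int p dvd gcd (e_quot G P) (int d)" using p(4) by simp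
        then have "int p dvd 1" using b p by auto
        then show False using p(1) by (simp add: prime_gt_1_nat)
      qed
    qed
  next
    assume c: "d \<in> Pi_star G"
    show "\<forall>P. homogeneous_ideal G P \<and> height_one P \<longrightarrow> gcd (e_quot G P) (int d) = 1"
    proof (intro allI impI)
      fix P assume P: "homogeneous_ideal G P \<and> height_one P"
      show "gcd (e_quot G P) (int d) = 1"
      proof (rule ccontr)
        assume g: "gcd (e_quot G P) (int d) \<noteq> 1"
        define n where "n = nat (gcd (e_quot G P) (int d))"
        have "n \<noteq> 1" using g unfolding n_def by (simp add: nat_eq_iff)
        then obtain p where p: "prime p" "p dvd n" using prime_factor_nat by blast
        have nn: "int n = gcd (e_quot G P) (int d)" unfolding n_def by simp
        have "int p dvd int n" using p(2) by simp
        then have pg: "int p dvd gcd (e_quot G P) (int d)" unfolding nn .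
        have pe: "int p dvd e_quot G P" using pg dvd_trans gcd_dvd1 by blast
        have "int p dvd int d" using pg dvd_trans gcd_dvd2 by blast
        then have pd: "p dvd d" by simp
        have "p \<in> Pi_set G" unfolding Pi_set_def using p(1) P pe by auto
        then show False using c pd unfolding Pi_star_def by auto
      qed
    qed
  qed
  show ?thesis using Xne AB BC by blast
qed

end
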